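(* Let $G$ be a rooted graph. For any integers $k,g\ge 0$ and $m,h\ge 1$, \begin{align*} X_{S_h^{gk}(G,\,K_m)}&=(m-1)!\Bigg(\sum_{z=0}^{m-1}e_z\,X_{G^{g+h+k+m-z-1}}-\sum_{z=1}^{m-1}\frac{X_{K_z^h}}{(z-1)!}\,X_{G^{g+k+m-z-1}}\Bigg)\\ &\qquad+\sum_{z=0}^{k-1}\Big(X_{K_m^{z}}\,X_{G^{g+h+k-z-1}}-X_{K_m^{h+z}}\,X_{G^{g+k-z-1}}\Big). \end{align*}
   Context: All graphs are finite simple graphs. The chromatic symmetric function of a graph $G$ is $X_G=\sum_{\kappa}\prod_{v\in V(G)}x_{\kappa(v)}$, where $\kappa$ ranges over proper colorings $\kappa:V(G)\to\{1,2,\dots\}$; $e_z$ is the $z$-th elementary symmetric function, $e_0=1$. For a rooted graph $G$ and $t\ge0$, $G^t$ is $G$ with a pendant path of length $t$ attached at its root; $K_s^t$ is the lollipop ($K_s$ with a pendant path of length $t$ at one vertex). $S_h^{gk}(G,K_m)$ is the graph obtained by taking a center vertex $c$ and three paths from $c$, disjoint except at $c$, of lengths $g$, $k$, $h$, identifying the far end of the first path (or $c$ if $g=0$) with the root of $G$, identifying the far end of the second path (or $c$ if $k=0$) with a vertex of a disjoint complete graph $K_m$, and leaving the third path as a pendant path ending at a leaf. *)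

theory Defs
  imports Complex_Main "HOL-Library.FuncSet"
begin

type_synonym 'a graph = "'a set \<times> 'a set set"

definition simple_graph :: "'a graph \<Rightarrow> bool" where
  "simple_graph G \<longleftrightarrow> finite (fst G) \<and> (\<forall>e\<in>snd G. e \<subseteq> fst G \<and> card e = 2)"

definition proper_coloring :: "'a graph \<Rightarrow> ('a \<Rightarrow> nat) \<Rightarrow> bool" where
  "proper_coloring G \<kappa> \<longleftrightarrow> (\<forall>e\<in>snd G. \<forall>u\<in>e. \<forall>v\<in>e. u \<noteq> v \<longrightarrow> \<kappa> u \<noteq> \<kappa> v)"

text \<open>Chromatic symmetric function specialised to the n variables x 0, ..., x (n-1)
  (colours 0..n-1): sum over proper colourings of the product of x (colour v).\<close>
definition csf :: "'a graph \<Rightarrow> nat \<Rightarrow> (nat \<Rightarrow> real) \<Rightarrow> real" where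
  "csf G n x = (\<Sum>\<kappa>\<in>{\<kappa>\<in>fst G \<rightarrow>\<^sub>E {..<n}. proper_coloring G \<kappa>}. \<Prod>v\<in>fst G. x (\<kappa> v))"

definition esym :: "nat \<Rightarrow> nat \<Rightarrow> (nat \<Rightarrow> real) \<Rightarrow> real" where
  "esym n z x = (\<Sum>S\<in>{S. S \<subseteq> {..<n} \<and> card S = z}. \<Prod>i\<in>S. x i)"

text \<open>G^t: attach a pendant path of length t at the root r. Path vertices are
  Inl r (position 0) and Inr i for 1 \<le> i \<le> t.\<close>
definition pvert :: "'a \<Rightarrow> nat \<Rightarrow> 'a + nat" where
  "pvert r i = (if i = 0 then Inl r else Inr i)"

definition pend :: "'a graph \<Rightarrow> 'a \<Rightarrow> nat \<Rightarrow> ('a + nat) graph" where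
  "pend G r t = (Inl ` fst G \<union> Inr ` {1..t},
     (image Inl) ` snd G \<union> {{pvert r i, pvert r (Suc i)} | i. i < t})"

definition complete :: "nat \<Rightarrow> nat graph" where
  "complete s = ({..<s}, {{i, j} | i j. i < s \<and> j < s \<and> i \<noteq> j})"

definition lollipop :: "nat \<Rightarrow> nat \<Rightarrow> (nat + nat) graph" where
  "lollipop s t = pend (complete s) 0 t"

text \<open>The graph S_h^{gk}(G, K_m). Centre vertex cen; first path A 0 = cen, ..., A g = root of G;
  second path B 0 = cen, ..., B k = vertex 0 of K_m; third (pendant) path C 0 = cen, ..., C h.\<close>
definition s_cen :: "'a \<Rightarrow> nat \<Rightarrow> nat \<Rightarrow> 'a + (nat + nat \<times> nat)" where
  "s_cen r g k = (if g = 0 then Inl r else if k = 0 then Inr (Inl 0) else Inr (Inr (0, 0)))"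

definition s_A :: "'a \<Rightarrow> nat \<Rightarrow> nat \<Rightarrow> nat \<Rightarrow> 'a + (nat + nat \<times> nat)" where
  "s_A r g k i = (if i = 0 then s_cen r g k else if i = g then Inl r else Inr (Inr (1, i)))"

definition s_B :: "'a \<Rightarrow> nat \<Rightarrow> nat \<Rightarrow> nat \<Rightarrow> 'a + (nat + nat \<times> nat)" where
  "s_B r g k i = (if i = 0 then s_cen r g k else if i = k then Inr (Inl 0) else Inr (Inr (2, i)))"

definition s_C :: "'a \<Rightarrow> nat \<Rightarrow> nat \<Rightarrow> nat \<Rightarrow> 'a + (nat + nat \<times> nat)" where
  "s_C r g k i = (if i = 0 then s_cen r g k else Inr (Inr (3, i)))"

definition s_K :: "'a \<Rightarrow> nat \<Rightarrow> nat \<Rightarrow> nat \<Rightarrow> 'a + (nat + nat \<times> nat)" where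
  "s_K r g k i = (if i = 0 then s_B r g k k else Inr (Inl i))"

definition spider :: "'a graph \<Rightarrow> 'a \<Rightarrow> nat \<Rightarrow> nat \<Rightarrow> nat \<Rightarrow> nat \<Rightarrow> ('a + (nat + nat \<times> nat)) graph" where
  "spider G r h g k m =
    (Inl ` fst G \<union> s_K r g k ` {..<m} \<union> s_A r g k ` {0..g} \<union> s_B r g k ` {0..k} \<union> s_C r g k ` {0..h},
     (image Inl) ` snd G
     \<union> {{s_K r g k i, s_K r g k j} | i j. i < m \<and> j < m \<and> i \<noteq> j}
     \<union> {{s_A r g k i, s_A r g k (Suc i)} | i. i < g}
     \<union> {{s_B r g k i, s_B r g k (Suc i)} | i. i < k}
     \<union> {{s_C r g k i, s_C r g k (Suc i)} | i. i < h})"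

end

theory Submission
  imports Defs
begin


definition W :: "'v graph \<Rightarrow> 'v \<Rightarrow> nat \<Rightarrow> (nat \<Rightarrow> real) \<Rightarrow> nat \<Rightarrow> real" where
  "W H v n x d = (\<Sum>\<kappa>\<in>{\<kappa>\<in>fst H \<rightarrow>\<^sub>E {..<n}. proper_coloring H \<kappa> \<and> \<kappa> v = d}. \<Prod>u\<in>fst H - {v}. x (\<kappa> u))"

lemma split_col:
  assumes "finite S" "\<forall>\<kappa>\<in>S. \<kappa> v < (n::nat)"
  shows "(\<Sum>\<kappa>\<in>S. f \<kappa>) = (\<Sum>c<n. \<Sum>\<kappa>\<in>{\<kappa>\<in>S. \<kappa> v = c}. f \<kappa>)"
proof -
  have "(\<lambda>\<kappa>. \<kappa> v) ` S \<subseteq> {..<n}" using assms(2) by auto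
  from sum.group[OF assms(1) finite_lessThan this, of f] show ?thesis by simp
qed

lemma csf_W:
  assumes "finite (fst H)" "v \<in> fst H"
  shows "csf H n x = (\<Sum>d<n. x d * W H v n x d)"
proof -
  let ?S = "{\<kappa>\<in>fst H \<rightarrow>\<^sub>E {..<n}. proper_coloring H \<kappa>}"
  have fin: "finite ?S" by (rule finite_subset[OF _ finite_PiE[OF assms(1), of "\<lambda>_. {..<n}"]]) auto
  have "csf H n x = (\<Sum>\<kappa>\<in>?S. x (\<kappa> v) * (\<Prod>u\<in>fst H - {v}. x (\<kappa> u)))"
    unfolding csf_def using assms by (intro sum.cong refl) (simp add: prod.remove)
  also have "\<dots> = (\<Sum>c<n. \<Sum>\<kappa>\<in>{\<kappa>\<in>?S. \<kappa> v = c}. x (\<kappa> v) * (\<Prod>u\<in>fst H - {v}. x (\<kappa> u)))"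
    using assms by (intro split_col fin) auto
  also have "\<dots> = (\<Sum>d<n. x d * W H v n x d)"
    unfolding W_def sum_distrib_left by (intro sum.cong refl) (auto intro: sum.cong)
  finally show ?thesis .
qed

lemma leaf:
  assumes finV: "finite V" and vV: "v \<in> V" and wV: "w \<notin> V" and EV: "\<forall>e\<in>E. e \<subseteq> V" and dn: "d < n"
  shows "W (insert w V, insert {v,w} E) w n x d = (\<Sum>c<n. x c * W (V,E) v n x c) - x d * W (V,E) v n x d"
proof -
  let ?S = "{\<kappa>\<in>V \<rightarrow>\<^sub>E {..<n}. proper_coloring (V,E) \<kappa> \<and> \<kappa> v \<noteq> d}"
  let ?S' = "{\<kappa>\<in>insert w V \<rightarrow>\<^sub>E {..<n}. proper_coloring (insert w V, insert {v,w} E) \<kappa> \<and> \<kappa> w = d}"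
  have fin: "finite ?S" by (rule finite_subset[OF _ finite_PiE[OF finV, of "\<lambda>_. {..<n}"]]) auto
  have pc: "proper_coloring (V,E) (restrict \<kappa> V) = proper_coloring (V,E) \<kappa>" for \<kappa>
    using EV unfolding proper_coloring_def by (auto simp: subset_iff)
  have pc2: "proper_coloring (insert w V, insert {v,w} E) \<kappa> \<longleftrightarrow> proper_coloring (V,E) \<kappa> \<and> \<kappa> v \<noteq> \<kappa> w" for \<kappa>
    using vV wV unfolding proper_coloring_def by auto
  have pc3: "proper_coloring (V,E) (\<kappa>(w:=d)) = proper_coloring (V,E) \<kappa>" for \<kappa>
    using EV wV unfolding proper_coloring_def by (auto simp: subset_iff) (metis fun_upd_apply)+
  have "W (insert w V, insert {v,w} E) w n x d = (\<Sum>\<kappa>\<in>?S'. \<Prod>u\<in>V. x (\<kappa> u))"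
    unfolding W_def using wV by simp
  also have "\<dots> = (\<Sum>\<kappa>\<in>?S. \<Prod>u\<in>V. x (\<kappa> u))"
  proof (rule sum.reindex_bij_witness[where j = "\<lambda>\<kappa>. restrict \<kappa> V" and i = "\<lambda>\<kappa>. \<kappa>(w:=d)"])
    fix a assume a: "a \<in> ?S'"
    show "(restrict a V)(w := d) = a"
      using a wV by (auto simp: PiE_def extensional_def fun_eq_iff)
    show "restrict a V \<in> ?S" using a vV pc pc2 by (auto simp: PiE_def extensional_def)
    show "(\<Prod>u\<in>V. x (restrict a V u)) = (\<Prod>u\<in>V. x (a u))" by (rule prod.cong) auto
  next
    fix b assume b: "b \<in> ?S"
    show "restrict (b(w := d)) V = b" using b wV by (auto simp: PiE_def extensional_def fun_eq_iff)
    show "b(w := d) \<in> ?S'" using b vV wV dn pc3 pc2 by (auto simp: PiE_def extensional_def)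
  qed
  also have "\<dots> = (\<Sum>\<kappa>\<in>?S. x (\<kappa> v) * (\<Prod>u\<in>V - {v}. x (\<kappa> u)))"
    using finV vV by (intro sum.cong refl) (simp add: prod.remove)
  also have "\<dots> = (\<Sum>c<n. \<Sum>\<kappa>\<in>{\<kappa>\<in>?S. \<kappa> v = c}. x (\<kappa> v) * (\<Prod>u\<in>V - {v}. x (\<kappa> u)))"
    using vV by (intro split_col fin) auto
  also have "\<dots> = (\<Sum>c<n. if c = d then 0 else x c * W (V,E) v n x c)"
    unfolding W_def sum_distrib_left by (intro sum.cong refl) (auto intro: sum.cong)
  also have "\<dots> = (\<Sum>c<n. x c * W (V,E) v n x c) - x d * W (V,E) v n x d"
    using dn by (simp add: sum.If_cases lessThan_def Diff_eq[symmetric] sum_diff1)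
  finally show ?thesis .
qed



lemma glue:
  assumes f1: "finite V1" and f2: "finite V2" and int: "V1 \<inter> V2 = {v}"
    and E1: "\<forall>e\<in>E1. e \<subseteq> V1" and E2: "\<forall>e\<in>E2. e \<subseteq> V2"
  shows "W (V1 \<union> V2, E1 \<union> E2) v n x d = W (V1,E1) v n x d * W (V2,E2) v n x d"
proof -
  let ?S1 = "{\<kappa>\<in>V1 \<rightarrow>\<^sub>E {..<n}. proper_coloring (V1,E1) \<kappa> \<and> \<kappa> v = d}"
  let ?S2 = "{\<kappa>\<in>V2 \<rightarrow>\<^sub>E {..<n}. proper_coloring (V2,E2) \<kappa> \<and> \<kappa> v = d}"
  let ?S = "{\<kappa>\<in>V1 \<union> V2 \<rightarrow>\<^sub>E {..<n}. proper_coloring (V1 \<union> V2, E1 \<union> E2) \<kappa> \<and> \<kappa> v = d}"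
  have vin: "v \<in> V1" "v \<in> V2" using int by auto
  have pcU: "proper_coloring (V1 \<union> V2, E1 \<union> E2) \<kappa> \<longleftrightarrow> proper_coloring (V1,E1) \<kappa> \<and> proper_coloring (V2,E2) \<kappa>" for \<kappa>
    unfolding proper_coloring_def by auto
  have pcA: "proper_coloring (V1,E1) \<kappa> = proper_coloring (V1,E1) \<kappa>'" if "\<forall>u\<in>V1. \<kappa> u = \<kappa>' u" for \<kappa> \<kappa>'
    using E1 that unfolding proper_coloring_def by (auto simp: subset_iff) 
  have pcB: "proper_coloring (V2,E2) \<kappa> = proper_coloring (V2,E2) \<kappa>'" if "\<forall>u\<in>V2. \<kappa> u = \<kappa>' u" for \<kappa> \<kappa>'
    using E2 that unfolding proper_coloring_def by (auto simp: subset_iff) 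
  have dj: "(V1 - {v}) \<inter> (V2 - {v}) = {}" using int by auto
  have U: "V1 \<union> V2 - {v} = (V1 - {v}) \<union> (V2 - {v})" by auto
  have "W (V1,E1) v n x d * W (V2,E2) v n x d =
      (\<Sum>p\<in>?S1 \<times> ?S2. (\<Prod>u\<in>V1 - {v}. x (fst p u)) * (\<Prod>u\<in>V2 - {v}. x (snd p u)))"
    unfolding W_def by (simp add: sum_product sum.cartesian_product case_prod_beta)
  also have "\<dots> = (\<Sum>\<kappa>\<in>?S. \<Prod>u\<in>V1 \<union> V2 - {v}. x (\<kappa> u))"
  proof (rule sum.reindex_bij_witness[where j = "\<lambda>p u. if u \<in> V1 then fst p u else snd p u"
        and i = "\<lambda>\<kappa>. (restrict \<kappa> V1, restrict \<kappa> V2)"])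
    fix a assume a: "a \<in> ?S1 \<times> ?S2"
    then obtain a1 a2 where aa: "a = (a1,a2)" "a1 \<in> ?S1" "a2 \<in> ?S2" by auto
    have ag: "a1 u = a2 u" if "u \<in> V1" "u \<in> V2" for u
    proof -
      have "u = v" using that int by auto
      then show ?thesis using aa by auto
    qed
    show "(restrict (\<lambda>u. if u \<in> V1 then fst a u else snd a u) V1,
          restrict (\<lambda>u. if u \<in> V1 then fst a u else snd a u) V2) = a"
      using aa ag by (auto simp: PiE_def extensional_def fun_eq_iff)
    have "(\<lambda>u. if u \<in> V1 then a1 u else a2 u) \<in> V1 \<union> V2 \<rightarrow>\<^sub>E {..<n}" using aa by (auto simp: PiE_def extensional_def)
    moreover have "proper_coloring (V1,E1) (\<lambda>u. if u \<in> V1 then a1 u else a2 u)"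
      using aa pcA[of "(\<lambda>u. if u \<in> V1 then a1 u else a2 u)" a1] by auto
    moreover have "proper_coloring (V2,E2) (\<lambda>u. if u \<in> V1 then a1 u else a2 u)"
      using aa ag pcB[of "(\<lambda>u. if u \<in> V1 then a1 u else a2 u)" a2] by auto
    ultimately show "(\<lambda>u. if u \<in> V1 then fst a u else snd a u) \<in> ?S"
      unfolding aa(1) fst_conv snd_conv using aa(2,3) vin pcU by auto
    show "(\<Prod>u\<in>V1 \<union> V2 - {v}. x (if u \<in> V1 then fst a u else snd a u)) =
        (\<Prod>u\<in>V1 - {v}. x (fst a u)) * (\<Prod>u\<in>V2 - {v}. x (snd a u))"
      unfolding U using f1 f2 dj ag aa
      by (subst prod.union_disjoint) (auto intro!: arg_cong2[where f = "(*)"] prod.cong)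
  next
    fix b assume b: "b \<in> ?S"
    show "(\<lambda>u. if u \<in> V1 then fst (restrict b V1, restrict b V2) u else snd (restrict b V1, restrict b V2) u) = b"
      using b by (auto simp: PiE_def extensional_def fun_eq_iff)
    have "proper_coloring (V1,E1) (restrict b V1)" "proper_coloring (V2,E2) (restrict b V2)"
      using b pcU pcA[of "restrict b V1" b] pcB[of "restrict b V2" b] by auto
    then show "(restrict b V1, restrict b V2) \<in> ?S1 \<times> ?S2" using b vin by auto
  qed
  finally show ?thesis unfolding W_def by simp
qed

definition T :: "nat \<Rightarrow> (nat \<Rightarrow> real) \<Rightarrow> (nat \<Rightarrow> real) \<Rightarrow> nat \<Rightarrow> real" where
  "T n x w = (\<lambda>d. (\<Sum>c<n. x c * w c) - x d * w d)"

lemma T_apply: "T n x w d = (\<Sum>c<n. x c * w c) - x d * w d"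
  by (simp add: T_def)

lemma T_cong: "\<forall>c<n. w1 c = w2 c \<Longrightarrow> d < n \<Longrightarrow> T n x w1 d = T n x w2 d"
  unfolding T_def by simp

lemma Tpow_cong: "\<forall>c<n. w1 c = w2 c \<Longrightarrow> d < n \<Longrightarrow> (T n x ^^ t) w1 d = (T n x ^^ t) w2 d"
proof (induction t arbitrary: d)
  case 0 then show ?case by simp
next
  case (Suc t) then show ?case by (simp add: T_cong)
qed

lemma path:
  assumes finV: "finite V" and vV: "v \<in> V" and EV: "\<forall>e\<in>E. e \<subseteq> V"
    and p0: "p 0 = v" and inj: "inj_on p {0..t}" and dis: "p ` {1..t} \<inter> V = {}"
  shows "\<forall>d<n. W (V \<union> p ` {1..t}, E \<union> {{p i, p (Suc i)} | i. i < t}) (p t) n x d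
               = (T n x ^^ t) (W (V,E) v n x) d"
  using inj dis
proof (induction t)
  case 0 then show ?case using p0 by simp
next
  case (Suc t)
  have inj': "inj_on p {0..t}" using Suc.prems(1) by (rule inj_on_subset) auto
  have dis': "p ` {1..t} \<inter> V = {}"
  proof -
    have "p ` {1..t} \<subseteq> p ` {1..Suc t}" by (rule image_mono) auto
    with Suc.prems(2) show ?thesis by blast
  qed
  note IH = Suc.IH[OF inj' dis']
  let ?V = "V \<union> p ` {1..t}" and ?E = "E \<union> {{p i, p (Suc i)} | i. i < t}"
  have eqV: "V \<union> p ` {1..Suc t} = insert (p (Suc t)) ?V" by (auto simp: atLeastAtMostSuc_conv)
  have eqE: "E \<union> {{p i, p (Suc i)} | i. i < Suc t} = insert {p t, p (Suc t)} ?E" by (auto simp: less_Suc_eq)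
  have ptV: "p t \<in> ?V" using p0 vV by (cases t) auto
  have nin1: "p (Suc t) \<notin> V"
  proof -
    have "p (Suc t) \<in> p ` {1..Suc t}" by auto
    with Suc.prems(2) show ?thesis by blast
  qed
  have nin2: "p (Suc t) \<notin> p ` {1..t}"
  proof
    assume "p (Suc t) \<in> p ` {1..t}"
    then obtain i where "i \<in> {1..t}" "p (Suc t) = p i" by auto
    with Suc.prems(1) show False by (auto dest: inj_onD)
  qed
  have pin: "p i \<in> ?V" if "i \<le> t" for i
  proof (cases i)
    case 0 then show ?thesis using p0 vV by simp
  next
    case (Suc j) then show ?thesis using that by auto
  qed
  have EV': "\<forall>e\<in>?E. e \<subseteq> ?V"
  proof
    fix e assume "e \<in> ?E"
    then consider "e \<in> E" | i where "i < t" "e = {p i, p (Suc i)}" by blast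
    then show "e \<subseteq> ?V"
    proof cases
      case 1 then show ?thesis using EV by blast
    next
      case 2 then show ?thesis using pin[of i] pin[of "Suc i"] by simp
    qed
  qed
  show ?case
  proof (intro allI impI)
    fix d assume dn: "d < n"
    have "W (V \<union> p ` {1..Suc t}, E \<union> {{p i, p (Suc i)} | i. i < Suc t}) (p (Suc t)) n x d
       = (\<Sum>c<n. x c * W (?V,?E) (p t) n x c) - x d * W (?V,?E) (p t) n x d"
      unfolding eqV eqE
      by (rule leaf) (use finV ptV nin1 nin2 EV' dn in auto)
    also have "\<dots> = T n x ((T n x ^^ t) (W (V,E) v n x)) d"
      unfolding T_apply[of n x "(T n x ^^ t) (W (V,E) v n x)" d] using IH dn by simp
    finally show "W (V \<union> p ` {1..Suc t}, E \<union> {{p i, p (Suc i)} | i. i < Suc t}) (p (Suc t)) n x d =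
         (T n x ^^ Suc t) (W (V, E) v n x) d" by simp
  qed
qed



definition esx :: "(nat \<Rightarrow> real) \<Rightarrow> nat \<Rightarrow> nat set \<Rightarrow> real" where
  "esx x j B = (\<Sum>S\<in>{S. S \<subseteq> B \<and> card S = j}. \<Prod>i\<in>S. x i)"

lemma finF: "finite B \<Longrightarrow> finite {S. S \<subseteq> B \<and> card S = j}"
  by (rule finite_subset[of _ "Pow B"]) auto

lemma card_ins: "finite B \<Longrightarrow> S \<subseteq> B - {c} \<Longrightarrow> card (insert c S) = Suc (card S)"
  by (subst card_insert_disjoint) (auto dest: finite_subset)

lemma prod_ins: "finite B \<Longrightarrow> S \<subseteq> B - {c} \<Longrightarrow> prod x (insert c S) = x c * prod x S"
  by (subst prod.insert) (auto dest: finite_subset)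

lemma esx_0: "finite B \<Longrightarrow> esx x 0 B = 1"
proof -
  assume "finite B"
  then have "S = {}" if "S \<subseteq> B" "card S = 0" for S using that by (metis card_0_eq finite_subset)
  then have "{S. S \<subseteq> B \<and> card S = 0} = {{}}" by auto
  then show ?thesis unfolding esx_def by simp
qed

lemma esx_count:
  assumes fB: "finite B"
  shows "(\<Sum>c\<in>B. x c * esx x j (B - {c})) = real (Suc j) * esx x (Suc j) B"
proof -
  let ?F = "\<lambda>B j. {S. S \<subseteq> B \<and> card S = j}"
  have "(\<Sum>c\<in>B. x c * esx x j (B - {c})) = (\<Sum>c\<in>B. \<Sum>S\<in>?F (B - {c}) j. x c * (\<Prod>i\<in>S. x i))"
    unfolding esx_def sum_distrib_left by simp
  also have "\<dots> = (\<Sum>p\<in>Sigma B (\<lambda>c. ?F (B - {c}) j). \<Prod>i\<in>insert (fst p) (snd p). x i)"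
  proof -
    have pi: "x c * prod x S = prod x (insert c S)" if "c \<in> B" "S \<subseteq> B - {c}" for c S
      using fB that by (subst prod.insert) (auto dest: finite_subset)
    show ?thesis using fB by (subst sum.Sigma) (auto simp: finF pi intro!: sum.cong)
  qed
  also have "\<dots> = (\<Sum>p\<in>Sigma (?F B (Suc j)) (\<lambda>T. T). \<Prod>i\<in>fst p. x i)"
  proof (rule sum.reindex_bij_witness[where j = "\<lambda>p. (insert (fst p) (snd p), fst p)"
        and i = "\<lambda>p. (snd p, fst p - {snd p})"])
    fix a assume a: "a \<in> Sigma B (\<lambda>c. ?F (B - {c}) j)"
    then show "(snd (insert (fst a) (snd a), fst a), fst (insert (fst a) (snd a), fst a) - {snd (insert (fst a) (snd a), fst a)}) = a"
      by (cases a) auto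
    from a have "finite (snd a)" using fB by (cases a) (auto dest: finite_subset)
    then show "(insert (fst a) (snd a), fst a) \<in> Sigma (?F B (Suc j)) (\<lambda>T. T)"
      using a fB by (cases a) (auto simp: card_ins)
  next
    fix b assume b: "b \<in> Sigma (?F B (Suc j)) (\<lambda>T. T)"
    then show "(insert (fst (snd b, fst b - {snd b})) (snd (snd b, fst b - {snd b})), fst (snd b, fst b - {snd b})) = b"
      by (cases b) auto
    from b have "finite (fst b)" using fB by (cases b) (auto dest: finite_subset)
    then show "(snd b, fst b - {snd b}) \<in> Sigma B (\<lambda>c. ?F (B - {c}) j)"
      using b by (cases b) auto
  qed simp
  also have "\<dots> = (\<Sum>T\<in>?F B (Suc j). \<Sum>c\<in>T. \<Prod>i\<in>T. x i)"
    using fB by (subst sum.Sigma) (auto simp: finF case_prod_beta dest: finite_subset)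
  also have "\<dots> = (\<Sum>T\<in>?F B (Suc j). real (Suc j) * (\<Prod>i\<in>T. x i))"
    by (intro sum.cong) auto
  also have "\<dots> = real (Suc j) * esx x (Suc j) B"
    unfolding esx_def sum_distrib_left by simp
  finally show ?thesis .
qed

lemma esx_split:
  assumes fB: "finite B" and dB: "d \<in> B"
  shows "esx x (Suc j) B = esx x (Suc j) (B - {d}) + x d * esx x j (B - {d})"
proof -
  let ?F = "\<lambda>B j. {S. S \<subseteq> B \<and> card S = j}"
  have eq: "?F B (Suc j) = ?F (B - {d}) (Suc j) \<union> insert d ` ?F (B - {d}) j"
  proof (intro set_eqI iffI)
    fix S assume S: "S \<in> ?F B (Suc j)"
    show "S \<in> ?F (B - {d}) (Suc j) \<union> insert d ` ?F (B - {d}) j"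
    proof (cases "d \<in> S")
      case True
      have "finite S" using S fB by (auto dest: finite_subset)
      then have "S - {d} \<in> ?F (B - {d}) j" using S True by auto
      moreover have "S = insert d (S - {d})" using True by auto
      ultimately show ?thesis by blast
    next
      case False then show ?thesis using S by auto
    qed
  next
    fix S assume "S \<in> ?F (B - {d}) (Suc j) \<union> insert d ` ?F (B - {d}) j"
    moreover have "card (insert d S') = Suc (card S')" if "S' \<subseteq> B - {d}" for S'
      using that fB by (subst card_insert_disjoint) (auto dest: finite_subset)
    ultimately show "S \<in> ?F B (Suc j)" using dB fB by auto
  qed
  have inj: "inj_on (insert d) (?F (B - {d}) j)"
    by (rule inj_onI) (metis (no_types, lifting) Diff_insert_absorb insert_subset mem_Collect_eq subset_Diff_insert)
  have "esx x (Suc j) B = esx x (Suc j) (B - {d}) + (\<Sum>S\<in>insert d ` ?F (B - {d}) j. \<Prod>i\<in>S. x i)"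
    unfolding esx_def eq using fB by (subst sum.union_disjoint) (auto simp: finF)
  also have "(\<Sum>S\<in>insert d ` ?F (B - {d}) j. \<Prod>i\<in>S. x i) = (\<Sum>S\<in>?F (B - {d}) j. x d * (\<Prod>i\<in>S. x i))"
    using fB by (subst sum.reindex[OF inj]) (auto intro!: sum.cong simp: prod_ins)
  finally show ?thesis unfolding esx_def sum_distrib_left .
qed

lemma inj_sum:
  assumes "finite D"
  shows "finite B \<Longrightarrow> (\<Sum>\<kappa>\<in>{\<kappa>\<in>D \<rightarrow>\<^sub>E B. inj_on \<kappa> D}. \<Prod>u\<in>D. x (\<kappa> u)) = fact (card D) * esx x (card D) B"
  using assms
proof (induction D arbitrary: B rule: finite_induct)
  case empty
  have "{\<kappa>\<in>{} \<rightarrow>\<^sub>E B. inj_on \<kappa> {}} = {\<lambda>_. undefined}" by auto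
  then show ?case using esx_0[OF empty.prems] by simp
next
  case (insert a D)
  let ?I = "\<lambda>D B. {\<kappa>\<in>D \<rightarrow>\<^sub>E B. inj_on \<kappa> D}"
  have "(\<Sum>\<kappa>\<in>?I (insert a D) B. \<Prod>u\<in>insert a D. x (\<kappa> u))
      = (\<Sum>p\<in>Sigma B (\<lambda>c. ?I D (B - {c})). x (fst p) * (\<Prod>u\<in>D. x (snd p u)))"
  proof (rule sum.reindex_bij_witness[where j = "\<lambda>\<kappa>. (\<kappa> a, restrict \<kappa> D)"
        and i = "\<lambda>p. (snd p)(a := fst p)"])
    fix k assume k: "k \<in> ?I (insert a D) B"
    show "(snd (k a, restrict k D))(a := fst (k a, restrict k D)) = k"
      using k insert.hyps by (auto simp: PiE_def extensional_def fun_eq_iff)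
    show "(k a, restrict k D) \<in> Sigma B (\<lambda>c. ?I D (B - {c}))"
      using k insert.hyps by (auto simp: PiE_def extensional_def inj_on_def)
    show "x (fst (k a, restrict k D)) * (\<Prod>u\<in>D. x (snd (k a, restrict k D) u)) = (\<Prod>u\<in>insert a D. x (k u))"
      using insert.hyps by (simp add: prod.insert)
  next
    fix p assume p: "p \<in> Sigma B (\<lambda>c. ?I D (B - {c}))"
    then obtain c k where pk: "p = (c, k)" "c \<in> B" "k \<in> ?I D (B - {c})" by auto
    show "(((snd p)(a := fst p)) a, restrict ((snd p)(a := fst p)) D) = p"
      using pk insert.hyps by (auto simp: PiE_def extensional_def fun_eq_iff)
    show "(snd p)(a := fst p) \<in> ?I (insert a D) B"
      using pk insert.hyps by (auto simp: PiE_def extensional_def inj_on_def)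
  qed
  also have "\<dots> = (\<Sum>c\<in>B. x c * (\<Sum>k\<in>?I D (B - {c}). \<Prod>u\<in>D. x (k u)))"
  proof -
    have sub: "?I D (B - {c}) \<subseteq> D \<rightarrow>\<^sub>E B" for c by (auto simp: PiE_iff extensional_def)
    have "finite (D \<rightarrow>\<^sub>E B)" using insert.hyps(1) insert.prems by (intro finite_PiE) auto
    then have "\<forall>c\<in>B. finite (?I D (B - {c}))" using sub by (blast intro: finite_subset)
    then show ?thesis unfolding sum_distrib_left
      by (subst sum.Sigma[OF insert.prems]) (auto simp: case_prod_beta)
  qed
  also have "\<dots> = (\<Sum>c\<in>B. x c * (fact (card D) * esx x (card D) (B - {c})))"
    using insert.IH insert.prems by simp
  also have "\<dots> = fact (card D) * (real (Suc (card D)) * esx x (Suc (card D)) B)"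
  proof -
    have "(\<Sum>c\<in>B. x c * (fact (card D) * esx x (card D) (B - {c}))) = fact (card D) * (\<Sum>c\<in>B. x c * esx x (card D) (B - {c}))"
      by (simp add: sum_distrib_left mult_ac)
    then show ?thesis using esx_count[OF insert.prems, of x "card D"] by simp
  qed
  also have "\<dots> = fact (card (insert a D)) * esx x (card (insert a D)) B"
    using insert.hyps by simp
  finally show ?case .
qed

lemma clique:
  assumes fQ: "finite Q" and vQ: "v \<in> Q" and dn: "d < n"
  shows "W (Q, {{a,b} | a b. a \<in> Q \<and> b \<in> Q \<and> a \<noteq> b}) v n x d
       = fact (card Q - 1) * esx x (card Q - 1) ({..<n} - {d})"
proof -
  let ?E = "{{a,b} | a b. a \<in> Q \<and> b \<in> Q \<and> a \<noteq> b}"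
  have pc: "proper_coloring (Q, ?E) \<kappa> \<longleftrightarrow> inj_on \<kappa> Q" for \<kappa>
    unfolding proper_coloring_def inj_on_def by auto
  have "W (Q, ?E) v n x d = (\<Sum>\<kappa>\<in>{\<kappa>\<in>Q - {v} \<rightarrow>\<^sub>E {..<n} - {d}. inj_on \<kappa> (Q - {v})}. \<Prod>u\<in>Q - {v}. x (\<kappa> u))"
    unfolding W_def fst_conv pc
  proof (rule sum.reindex_bij_witness[where j = "\<lambda>\<kappa>. restrict \<kappa> (Q - {v})" and i = "\<lambda>\<kappa>. \<kappa>(v := d)"])
    fix a assume a: "a \<in> {\<kappa> \<in> Q \<rightarrow>\<^sub>E {..<n}. inj_on \<kappa> Q \<and> \<kappa> v = d}"
    show "(restrict a (Q - {v}))(v := d) = a" using a by (auto simp: PiE_def extensional_def fun_eq_iff)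
    show "restrict a (Q - {v}) \<in> {\<kappa> \<in> Q - {v} \<rightarrow>\<^sub>E {..<n} - {d}. inj_on \<kappa> (Q - {v})}"
      using a vQ by (auto simp: PiE_def extensional_def inj_on_def)
    show "(\<Prod>u\<in>Q - {v}. x (restrict a (Q - {v}) u)) = (\<Prod>u\<in>Q - {v}. x (a u))" by (rule prod.cong) auto
  next
    fix b assume b: "b \<in> {\<kappa> \<in> Q - {v} \<rightarrow>\<^sub>E {..<n} - {d}. inj_on \<kappa> (Q - {v})}"
    show "restrict (b(v := d)) (Q - {v}) = b" using b by (auto simp: PiE_def extensional_def fun_eq_iff)
    show "b(v := d) \<in> {\<kappa> \<in> Q \<rightarrow>\<^sub>E {..<n}. inj_on \<kappa> Q \<and> \<kappa> v = d}"
      using b vQ dn by (auto simp: PiE_def extensional_def inj_on_def)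
  qed
  also have "\<dots> = fact (card Q - 1) * esx x (card Q - 1) ({..<n} - {d})"
    using inj_sum[of "Q - {v}" "{..<n} - {d}" x] fQ vQ by simp
  finally show ?thesis .
qed



definition ip :: "nat \<Rightarrow> (nat \<Rightarrow> real) \<Rightarrow> (nat \<Rightarrow> real) \<Rightarrow> (nat \<Rightarrow> real) \<Rightarrow> real" where
  "ip n x u v = (\<Sum>d<n. x d * u d * v d)"

lemma ip_cong: "\<forall>d<n. v1 d = v2 d \<Longrightarrow> ip n x u v1 = ip n x u v2"
  unfolding ip_def by simp

lemma ip_cong1: "\<forall>d<n. v1 d = v2 d \<Longrightarrow> ip n x v1 u = ip n x v2 u"
  unfolding ip_def by simp

lemma ip_lin: "ip n x w (\<lambda>d. f d + a * g d - b) = ip n x w f + a * ip n x w g - b * ip n x w (\<lambda>_. 1)"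
  unfolding ip_def by (simp add: algebra_simps sum.distrib sum_subtractf sum_distrib_left)

lemma ip_smult: "ip n x w (\<lambda>d. a * f d) = a * ip n x w f"
  unfolding ip_def by (simp add: algebra_simps sum_distrib_left)

lemma selfadj: "ip n x u (T n x w) = ip n x (T n x u) w"
  unfolding ip_def T_def
  by (simp add: algebra_simps sum_subtractf sum_distrib_left sum_distrib_right) (subst sum.swap, simp add: mult_ac)

lemma selfadj_pow: "ip n x u ((T n x ^^ k) w) = ip n x ((T n x ^^ k) u) w"
proof (induction k arbitrary: u)
  case 0 then show ?case by simp
next
  case (Suc k)
  have "ip n x u ((T n x ^^ Suc k) w) = ip n x u (T n x ((T n x ^^ k) w))" by simp
  also have "\<dots> = ip n x (T n x u) ((T n x ^^ k) w)" by (rule selfadj)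
  also have "\<dots> = ip n x ((T n x ^^ k) (T n x u)) w" by (rule Suc.IH)
  also have "\<dots> = ip n x ((T n x ^^ Suc k) u) w" by (simp add: funpow_Suc_right del: funpow.simps)
  finally show ?case .
qed

abbreviation U :: "nat \<Rightarrow> (nat \<Rightarrow> real) \<Rightarrow> nat \<Rightarrow> nat \<Rightarrow> real" where
  "U n x h \<equiv> (T n x ^^ h) (\<lambda>_. 1)"

lemma ipU: "ip n x (T n x w) (U n x j) = ip n x w (U n x (Suc j))"
  by (simp add: selfadj)

lemma Pk:
  "\<forall>w. ip n x w (\<lambda>d. U n x h d * (T n x ^^ k) v d) =
      ip n x ((T n x ^^ k) w) (\<lambda>d. U n x h d * v d)
      + (\<Sum>z<k. ip n x (\<lambda>_. 1) ((T n x ^^ z) v) * ip n x w (U n x (h + k - 1 - z))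
               - ip n x (\<lambda>_. 1) ((T n x ^^ (h + z)) v) * ip n x w (U n x (k - 1 - z)))"
proof (induction k)
  case 0 then show ?case by simp
next
  case (Suc k)
  show ?case
  proof
    fix w
    let ?a = "ip n x (\<lambda>_. 1) ((T n x ^^ k) v)"
    let ?b = "ip n x (U n x h) ((T n x ^^ k) v)"
    have pw: "U n x h d * (T n x ^^ Suc k) v d =
       T n x (\<lambda>d. U n x h d * (T n x ^^ k) v d) d + ?a * U n x h d - ?b" for d
      unfolding T_apply[of n x "(\<lambda>d. U n x h d * (T n x ^^ k) v d)"] funpow.simps o_apply
        T_apply[of n x "(T n x ^^ k) v"] ip_def
      by (simp add: algebra_simps sum_distrib_left)
    have b: "?b = ip n x (\<lambda>_. 1) ((T n x ^^ (h + k)) v)"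
      by (simp add: selfadj_pow funpow_add)
    have "ip n x w (\<lambda>d. U n x h d * (T n x ^^ Suc k) v d)
        = ip n x w (T n x (\<lambda>d. U n x h d * (T n x ^^ k) v d)) + ?a * ip n x w (U n x h) - ?b * ip n x w (\<lambda>_. 1)"
      unfolding pw by (rule ip_lin)
    also have "ip n x w (T n x (\<lambda>d. U n x h d * (T n x ^^ k) v d)) = ip n x (T n x w) (\<lambda>d. U n x h d * (T n x ^^ k) v d)"
      by (simp add: selfadj)
    also have "\<dots> = ip n x ((T n x ^^ Suc k) w) (\<lambda>d. U n x h d * v d)
      + (\<Sum>z<k. ip n x (\<lambda>_. 1) ((T n x ^^ z) v) * ip n x w (U n x (h + Suc k - 1 - z))
               - ip n x (\<lambda>_. 1) ((T n x ^^ (h + z)) v) * ip n x w (U n x (Suc k - 1 - z)))"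
    proof -
      have e1: "ip n x (T n x w) (U n x (h + k - 1 - z)) = ip n x w (U n x (h + Suc k - 1 - z))" if "z < k" for z
        using that ipU[of n x w "h + k - 1 - z"] by (simp add: Suc_diff_Suc)
      have e2: "ip n x (T n x w) (U n x (k - 1 - z)) = ip n x w (U n x (Suc k - 1 - z))" if "z < k" for z
        using that ipU[of n x w "k - 1 - z"] by (simp add: Suc_diff_Suc)
      show ?thesis using Suc.IH[rule_format, of "T n x w"] e1 e2
        by (simp add: funpow_Suc_right del: funpow.simps)
    qed
    finally show "ip n x w (\<lambda>d. U n x h d * (T n x ^^ Suc k) v d) =
      ip n x ((T n x ^^ Suc k) w) (\<lambda>d. U n x h d * v d)
      + (\<Sum>z<Suc k. ip n x (\<lambda>_. 1) ((T n x ^^ z) v) * ip n x w (U n x (h + Suc k - 1 - z))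
               - ip n x (\<lambda>_. 1) ((T n x ^^ (h + z)) v) * ip n x w (U n x (Suc k - 1 - z)))"
      unfolding b by simp
  qed
qed



abbreviation Ev :: "nat \<Rightarrow> (nat \<Rightarrow> real) \<Rightarrow> nat \<Rightarrow> nat \<Rightarrow> real" where
  "Ev n x j \<equiv> (\<lambda>d. esx x j ({..<n} - {d}))"

lemma esym_esx: "esym n z x = esx x z {..<n}"
  unfolding esym_def esx_def by simp

lemma E_rec: "d < n \<Longrightarrow> Ev n x (Suc j) d = esym n (Suc j) x - x d * Ev n x j d"
  using esx_split[of "{..<n}" d x j] by (simp add: esym_esx)

lemma Bj:
  "\<forall>w. ip n x w (\<lambda>d. U n x h d * Ev n x j d) =
      (\<Sum>z=0..j. esym n z x * ip n x w (U n x (h + j - z)))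
      - (\<Sum>z=1..j. ip n x (U n x h) (Ev n x (z - 1)) * ip n x w (U n x (j - z)))"
proof (induction j)
  case 0
  show ?case
  proof
    fix w
    have "ip n x w (\<lambda>d. U n x h d * Ev n x 0 d) = ip n x w (U n x h)"
      by (rule ip_cong) (simp add: esx_0)
    moreover have "esym n 0 x = 1" by (simp add: esym_esx esx_0)
    ultimately show "ip n x w (\<lambda>d. U n x h d * Ev n x 0 d) =
      (\<Sum>z=0..0. esym n z x * ip n x w (U n x (h + 0 - z)))
      - (\<Sum>z=1..0. ip n x (U n x h) (Ev n x (z - 1)) * ip n x w (U n x (0 - z)))" by simp
  qed
next
  case (Suc j)
  show ?case
  proof
    fix w
    let ?a = "esym n (Suc j) x"
    let ?b = "ip n x (U n x h) (Ev n x j)"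
    have pw: "\<forall>d<n. U n x h d * Ev n x (Suc j) d =
       T n x (\<lambda>d. U n x h d * Ev n x j d) d + ?a * U n x h d - ?b"
    proof (intro allI impI)
      fix d assume dn: "d < n"
      show "U n x h d * Ev n x (Suc j) d = T n x (\<lambda>d. U n x h d * Ev n x j d) d + ?a * U n x h d - ?b"
        unfolding E_rec[OF dn] T_apply[of n x "(\<lambda>d. U n x h d * Ev n x j d)"] ip_def
        by (simp add: algebra_simps)
    qed
    have "ip n x w (\<lambda>d. U n x h d * Ev n x (Suc j) d)
        = ip n x w (T n x (\<lambda>d. U n x h d * Ev n x j d)) + ?a * ip n x w (U n x h) - ?b * ip n x w (\<lambda>_. 1)"
      by (subst ip_cong[OF pw]) (rule ip_lin)
    also have "ip n x w (T n x (\<lambda>d. U n x h d * Ev n x j d)) = ip n x (T n x w) (\<lambda>d. U n x h d * Ev n x j d)"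
      by (simp add: selfadj)
    also have "\<dots> = (\<Sum>z=0..j. esym n z x * ip n x w (U n x (h + Suc j - z)))
      - (\<Sum>z=1..j. ip n x (U n x h) (Ev n x (z - 1)) * ip n x w (U n x (Suc j - z)))"
    proof -
      have e1: "ip n x (T n x w) (U n x (h + j - z)) = ip n x w (U n x (h + Suc j - z))" if "z \<le> j" for z
        using that ipU[of n x w "h + j - z"] by (simp add: Suc_diff_le)
      have e2: "ip n x (T n x w) (U n x (j - z)) = ip n x w (U n x (Suc j - z))" if "z \<le> j" for z
        using that ipU[of n x w "j - z"] by (simp add: Suc_diff_le)
      show ?thesis using Suc.IH[rule_format, of "T n x w"] e1 e2 by simp
    qed
    finally show "ip n x w (\<lambda>d. U n x h d * Ev n x (Suc j) d) =
      (\<Sum>z=0..Suc j. esym n z x * ip n x w (U n x (h + Suc j - z)))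
      - (\<Sum>z=1..Suc j. ip n x (U n x h) (Ev n x (z - 1)) * ip n x w (U n x (Suc j - z)))"
      by simp
  qed
qed



lemma rev_img: "(\<lambda>i. f (t - i)) ` {1..t} = f ` {0..<(t::nat)}"
proof (intro set_eqI iffI)
  fix y assume "y \<in> (\<lambda>i. f (t - i)) ` {1..t}"
  then show "y \<in> f ` {0..<t}" by auto
next
  fix y assume "y \<in> f ` {0..<t}"
  then obtain j where "j < t" "y = f j" by auto
  then have "t - j \<in> {1..t}" "y = f (t - (t - j))" by auto
  then show "y \<in> (\<lambda>i. f (t - i)) ` {1..t}" by blast
qed

lemma rev_edges: "{{f (t - i), f (t - Suc i)} | i. i < (t::nat)} = {{f j, f (Suc j)} | j. j < t}"
proof (intro set_eqI iffI)
  fix e assume "e \<in> {{f (t - i), f (t - Suc i)} | i. i < t}"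
  then obtain i where i: "i < t" "e = {f (t - i), f (t - Suc i)}" by auto
  then have "e = {f (t - Suc i), f (Suc (t - Suc i))}" "t - Suc i < t" by (auto simp: Suc_diff_Suc)
  then show "e \<in> {{f j, f (Suc j)} | j. j < t}" by blast
next
  fix e assume "e \<in> {{f j, f (Suc j)} | j. j < t}"
  then obtain j where j: "j < t" "e = {f j, f (Suc j)}" by auto
  then have "e = {f (t - (t - Suc j)), f (t - Suc (t - Suc j))}" "t - Suc j < t"
    by (auto simp: Suc_diff_Suc insert_commute)
  then show "e \<in> {{f (t - i), f (t - Suc i)} | i. i < t}" by blast
qed

lemma rev_inj: "inj_on f {0..(t::nat)} \<Longrightarrow> inj_on (\<lambda>i. f (t - i)) {0..t}"
proof (rule inj_onI)
  fix a b assume "inj_on f {0..t}" "a \<in> {0..t}" "b \<in> {0..t}" "f (t - a) = f (t - b)"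
  then have "t - a = t - b" by (auto dest: inj_onD)
  then show "a = b" using \<open>a \<in> {0..t}\<close> \<open>b \<in> {0..t}\<close> by auto
qed

lemma path_edges:
  assumes "\<forall>e\<in>E. e \<subseteq> V" "p 0 \<in> V"
  shows "\<forall>e\<in>E \<union> {{p i, p (Suc i)} | i. i < t}. e \<subseteq> V \<union> p ` {1..t}"
proof
  have pin: "p i \<in> V \<union> p ` {1..t}" if "i \<le> t" for i
  proof (cases i)
    case 0 then show ?thesis using assms by simp
  next
    case (Suc j) then show ?thesis using that by auto
  qed
  fix e assume "e \<in> E \<union> {{p i, p (Suc i)} | i. i < t}"
  then consider "e \<in> E" | i where "i < t" "e = {p i, p (Suc i)}" by blast
  then show "e \<subseteq> V \<union> p ` {1..t}"
  proof cases
    case 1 then show ?thesis using assms by blast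
  next
    case 2 then show ?thesis using pin[of i] pin[of "Suc i"] by simp
  qed
qed

lemma W_single: "d < n \<Longrightarrow> W ({a}, {}) a n x d = 1"
proof -
  assume dn: "d < n"
  have "{\<kappa>\<in>{a} \<rightarrow>\<^sub>E {..<n}. proper_coloring ({a}, {}) \<kappa> \<and> \<kappa> a = d} = {(\<lambda>_. undefined)(a := d)}"
    using dn by (auto simp: proper_coloring_def PiE_def extensional_def fun_eq_iff)
  then show ?thesis unfolding W_def by simp
qed

lemma csf_ip: "finite (fst H) \<Longrightarrow> v \<in> fst H \<Longrightarrow> \<forall>d<n. W H v n x d = w d \<Longrightarrow> csf H n x = ip n x (\<lambda>_. 1) w"
  by (simp add: csf_W ip_def)

lemma pend_W:
  fixes G :: "'a graph"
  assumes sg: "simple_graph G" and rV: "r \<in> fst G"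
  shows "\<forall>d<n. W (pend G r t) (pvert r t) n x d = (T n x ^^ t) (W (Inl ` fst G, image Inl ` snd G) (Inl r :: 'a + nat) n x) d"
proof -
  have eq: "pend G r t = (Inl ` fst G \<union> pvert r ` {1..t}, image Inl ` snd G \<union> {{pvert r i, pvert r (Suc i)} | i. i < t})"
  proof -
    have "pvert r ` {1..t} = Inr ` {1..t}" by (auto simp: pvert_def)
    then show ?thesis unfolding pend_def by simp
  qed
  show ?thesis unfolding eq
    by (rule path[where p = "pvert r" and V = "Inl ` fst G" and E = "image Inl ` snd G" and v = "Inl r"]) (use sg rV in \<open>auto simp: simple_graph_def pvert_def inj_on_def\<close>)
qed

lemma csf_pend:
  fixes G :: "'a graph"
  assumes sg: "simple_graph G" and rV: "r \<in> fst G"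
  shows "csf (pend G r t) n x = ip n x (\<lambda>_. 1) ((T n x ^^ t) (W (Inl ` fst G, image Inl ` snd G) (Inl r :: 'a + nat) n x))"
proof (rule csf_ip[OF _ _ pend_W[OF sg rV]])
  show "finite (fst (pend G r t))" using sg by (simp add: pend_def simple_graph_def)
  show "pvert r t \<in> fst (pend G r t)" using rV by (simp add: pend_def pvert_def)
qed

lemma sg_complete: "simple_graph (complete s)"
  unfolding simple_graph_def complete_def by auto

lemma csf_lolli:
  assumes z: "z \<ge> 1"
  shows "csf (lollipop z t) n x = ip n x (\<lambda>_. 1) ((T n x ^^ t) (\<lambda>d. fact (z - 1) * Ev n x (z - 1) d))"
proof -
  have r: "0 \<in> fst (complete z)" using z by (simp add: complete_def)
  have h1: "csf (lollipop z t) n x = ip n x (\<lambda>_. 1) ((T n x ^^ t) (W (Inl ` fst (complete z), image Inl ` snd (complete z)) (Inl 0 :: nat + nat) n x))"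
    unfolding lollipop_def by (rule csf_pend[OF sg_complete r])
  let ?Q = "Inl ` {..<z} :: (nat + nat) set"
  have eqE: "(image Inl ` snd (complete z) :: (nat + nat) set set) = {{a,b} | a b. a \<in> ?Q \<and> b \<in> ?Q \<and> a \<noteq> b}"
  proof (intro set_eqI iffI)
    fix e :: "(nat + nat) set" assume "e \<in> image Inl ` snd (complete z)"
    then show "e \<in> {{a,b} | a b. a \<in> ?Q \<and> b \<in> ?Q \<and> a \<noteq> b}" unfolding complete_def by auto
  next
    fix e :: "(nat + nat) set" assume "e \<in> {{a,b} | a b. a \<in> ?Q \<and> b \<in> ?Q \<and> a \<noteq> b}"
    then obtain i j where ij: "i < z" "j < z" "i \<noteq> j" "e = {Inl i, Inl j}" by auto
    then have "e = Inl ` {i, j}" "{i,j} \<in> snd (complete z)" unfolding complete_def by auto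
    then show "e \<in> image Inl ` snd (complete z)" by blast
  qed
  have cQ: "card ?Q = z" by (simp add: card_image)
  have key: "\<forall>c<n. W (Inl ` fst (complete z), image Inl ` snd (complete z)) (Inl 0 :: nat + nat) n x c = fact (z - 1) * Ev n x (z - 1) c"
    using z unfolding eqE by (auto simp: complete_def clique[of ?Q, unfolded cQ])
  show ?thesis unfolding h1 using key by (auto intro!: ip_cong Tpow_cong)
qed



lemma W_inj:
  assumes inj: "inj f" and EV: "\<forall>e\<in>E. e \<subseteq> V" and vV: "v \<in> V"
  shows "W (f ` V, image f ` E) (f v) n x d = W (V, E) v n x d"
  unfolding W_def fst_conv
proof (rule sum.reindex_bij_witness[where j = "\<lambda>\<kappa>. restrict (\<kappa> \<circ> f) V" and i = "\<lambda>\<kappa>. restrict (\<kappa> \<circ> inv f) (f ` V)"])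
  fix a assume a: "a \<in> {\<kappa> \<in> f ` V \<rightarrow>\<^sub>E {..<n}. proper_coloring (f ` V, (`) f ` E) \<kappa> \<and> \<kappa> (f v) = d}"
  show "restrict (restrict (a \<circ> f) V \<circ> inv f) (f ` V) = a"
    using a inj by (auto simp: PiE_def extensional_def fun_eq_iff)
  have "proper_coloring (V, E) (restrict (a \<circ> f) V)"
    using a EV inj unfolding proper_coloring_def
    by (auto simp: subset_iff inj_eq)
  then show "restrict (a \<circ> f) V \<in> {\<kappa> \<in> V \<rightarrow>\<^sub>E {..<n}. proper_coloring (V, E) \<kappa> \<and> \<kappa> v = d}"
    using a inj vV by (auto simp: PiE_def Pi_def extensional_def)
  show "(\<Prod>u\<in>V - {v}. x (restrict (a \<circ> f) V u)) = (\<Prod>u\<in>f ` V - {f v}. x (a u))"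
  proof -
    have "f ` V - {f v} = f ` (V - {v})" using inj by (auto simp: inj_eq)
    then show ?thesis using inj by (simp add: prod.reindex inj_on_def)
  qed
next
  fix b assume b: "b \<in> {\<kappa> \<in> V \<rightarrow>\<^sub>E {..<n}. proper_coloring (V, E) \<kappa> \<and> \<kappa> v = d}"
  show "restrict (restrict (b \<circ> inv f) (f ` V) \<circ> f) V = b"
    using b inj by (auto simp: PiE_def extensional_def fun_eq_iff)
  show "restrict (b \<circ> inv f) (f ` V) \<in> {\<kappa> \<in> f ` V \<rightarrow>\<^sub>E {..<n}. proper_coloring (f ` V, (`) f ` E) \<kappa> \<and> \<kappa> (f v) = d}"
  proof -
    have "proper_coloring (f ` V, (`) f ` E) (restrict (b \<circ> inv f) (f ` V))"
      using b inj EV unfolding proper_coloring_def by (auto simp: subset_iff inj_eq)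
    then show ?thesis using b inj vV by (auto simp: PiE_def Pi_def extensional_def)
  qed
qed



lemma sA_g: "s_A r g k g = Inl r" by (simp add: s_A_def s_cen_def)
lemma sA_0: "s_A r g k 0 = s_cen r g k" by (simp add: s_A_def)
lemma sB_0: "s_B r g k 0 = s_cen r g k" by (simp add: s_B_def)
lemma sC_0: "s_C r g k 0 = s_cen r g k" by (simp add: s_C_def)
lemma sK_0: "s_K r g k 0 = s_B r g k k" by (simp add: s_K_def)

lemma sA_inj: "inj_on (s_A r g k) {0..g}"
  by (auto simp: inj_on_def s_A_def s_cen_def split: if_splits)
lemma sB_inj: "inj_on (s_B r g k) {0..k}"
  by (auto simp: inj_on_def s_B_def s_cen_def split: if_splits)
lemma sC_inj: "inj_on (s_C r g k) {0..h}"
  by (auto simp: inj_on_def s_C_def s_cen_def split: if_splits)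
lemma sK_inj: "inj_on (s_K r g k) {..<m}"
  by (auto simp: inj_on_def s_K_def s_B_def s_cen_def split: if_splits)

lemma A_disj: "s_A r g k ` {0..<g} \<inter> Inl ` V = {}"
  by (auto simp: s_A_def s_cen_def split: if_splits)
lemma B_disj: "s_B r g k ` {0..<k} \<inter> s_K r g k ` {..<m} = {}"
  by (auto simp: s_K_def s_B_def s_cen_def split: if_splits)

lemma int1: "(Inl ` V \<union> s_A r g k ` {0..g}) \<inter> (s_C r g k ` {0..h} \<union> (s_K r g k ` {..<m} \<union> s_B r g k ` {0..k})) \<subseteq> {s_cen r g k}"
  by (auto simp: s_A_def s_B_def s_C_def s_K_def s_cen_def split: if_splits)

lemma int2: "s_C r g k ` {0..h} \<inter> (s_K r g k ` {..<m} \<union> s_B r g k ` {0..k}) \<subseteq> {s_cen r g k}"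
  by (auto simp: s_A_def s_B_def s_C_def s_K_def s_cen_def split: if_splits)



lemma spider_W:
  fixes G :: "'a graph"
  assumes sg: "simple_graph G" and rV: "r \<in> fst G" and m: "m \<ge> 1" and h: "h \<ge> 1" and dn: "d < n"
  shows "W (spider G r h g k m) (s_cen r g k) n x d =
    (T n x ^^ g) (W (Inl ` fst G, image Inl ` snd G) (Inl r :: 'a + (nat + nat \<times> nat)) n x) d * U n x h d
    * (T n x ^^ k) (\<lambda>d. fact (m - 1) * Ev n x (m - 1) d) d"
proof -
  define V where "V = fst G"
  define E where "E = snd G"
  have finV: "finite V" and EV: "\<forall>e\<in>E. e \<subseteq> V" using sg unfolding simple_graph_def V_def E_def by auto
  have rV': "r \<in> V" using rV V_def by simp
  define cen where "cen = s_cen r g k"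
  define pA where "pA = (\<lambda>i. s_A r g k (g - i))"
  define pB where "pB = (\<lambda>i. s_B r g k (k - i))"
  define pC where "pC = (\<lambda>i. s_C r g k (h - i))"
  define V0 where "V0 = (Inl ` V :: ('a + (nat + nat \<times> nat)) set)"
  define E0 where "E0 = (image Inl ` E :: ('a + (nat + nat \<times> nat)) set set)"
  define VA where "VA = V0 \<union> pA ` {1..g}"
  define EA where "EA = E0 \<union> {{pA i, pA (Suc i)} | i. i < g}"
  define VC where "VC = {s_C r g k h} \<union> pC ` {1..h}"
  define EC where "EC = {} \<union> {{pC i, pC (Suc i)} | i. i < h}"
  define VK where "VK = s_K r g k ` {..<m}"
  define EK where "EK = {{a,b} | a b. a \<in> VK \<and> b \<in> VK \<and> a \<noteq> b}"
  define VB where "VB = VK \<union> pB ` {1..k}"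
  define EB where "EB = EK \<union> {{pB i, pB (Suc i)} | i. i < k}"
  have VA': "VA = Inl ` V \<union> s_A r g k ` {0..g}"
  proof -
    have "s_A r g k ` {0..g} = insert (s_A r g k g) (s_A r g k ` {0..<g})" by (auto simp: atLeastLessThanSuc_atLeastAtMost[symmetric] atLeastLessThanSuc)
    then show ?thesis unfolding VA_def V0_def pA_def rev_img using rV' by (auto simp: sA_g)
  qed
  have VC': "VC = s_C r g k ` {0..h}"
  proof -
    have "s_C r g k ` {0..h} = insert (s_C r g k h) (s_C r g k ` {0..<h})" by (auto simp: atLeastLessThanSuc_atLeastAtMost[symmetric] atLeastLessThanSuc)
    then show ?thesis unfolding VC_def pC_def rev_img by auto
  qed
  have VB': "VB = s_K r g k ` {..<m} \<union> s_B r g k ` {0..k}"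
  proof -
    have "s_B r g k ` {0..k} = insert (s_B r g k k) (s_B r g k ` {0..<k})" by (auto simp: atLeastLessThanSuc_atLeastAtMost[symmetric] atLeastLessThanSuc)
    moreover have "s_B r g k k \<in> s_K r g k ` {..<m}" using m by (metis sK_0 image_eqI lessThan_iff less_le_trans zero_less_one)
    ultimately show ?thesis unfolding VB_def VK_def pB_def rev_img by auto
  qed
  have EK': "EK = {{s_K r g k i, s_K r g k j} | i j. i < m \<and> j < m \<and> i \<noteq> j}"
    unfolding EK_def VK_def using sK_inj[of r g k m] by (auto simp: inj_on_def)
  have sp: "spider G r h g k m = (VA \<union> (VC \<union> VB), EA \<union> (EC \<union> EB))"
  proof -
    have "fst (spider G r h g k m) = VA \<union> (VC \<union> VB)"
      unfolding spider_def VA' VB' VC' V_def by auto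
    moreover have "snd (spider G r h g k m) = EA \<union> (EC \<union> EB)"
      unfolding spider_def EA_def EB_def EC_def EK' E0_def E_def pA_def pB_def pC_def rev_edges by auto
    ultimately show ?thesis by (metis prod.collapse)
  qed
  have cenA: "pA g = cen" unfolding pA_def cen_def by (simp add: sA_0)
  have cenB: "pB k = cen" unfolding pB_def cen_def by (simp add: sB_0)
  have cenC: "pC h = cen" unfolding pC_def cen_def by (simp add: sC_0)
  have cinA: "cen \<in> VA" unfolding VA' cen_def by (metis sA_0 atLeastAtMost_iff image_eqI le0 UnI2)
  have cinB: "cen \<in> VB" unfolding VB' cen_def by (metis sB_0 atLeastAtMost_iff image_eqI le0 UnI2)
  have cinC: "cen \<in> VC" unfolding VC' cen_def by (metis sC_0 atLeastAtMost_iff image_eqI le0)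
  have i1: "VA \<inter> (VC \<union> VB) = {cen}"
    using int1[of V r g k h m] cinA cinB cinC unfolding VA' VB' VC' cen_def by blast
  have i2: "VC \<inter> VB = {cen}"
    using int2[of r g k h m] cinB cinC unfolding VB' VC' cen_def by blast
  have fA: "finite VA" unfolding VA_def V0_def using finV by simp
  have fB: "finite VB" unfolding VB_def VK_def by simp
  have fC: "finite VC" unfolding VC_def by simp
  have E0V: "\<forall>e\<in>E0. e \<subseteq> V0" using EV unfolding E0_def V0_def by auto
  have pA0: "pA 0 = Inl r" unfolding pA_def by (simp add: sA_g)
  have rV0: "Inl r \<in> V0" using rV' V0_def by simp
  have pB0: "pB 0 = s_K r g k 0" unfolding pB_def by (simp add: sK_0)
  have KV: "s_K r g k 0 \<in> VK" unfolding VK_def using m by auto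
  have pC0: "pC 0 = s_C r g k h" unfolding pC_def by simp
  have EAV: "\<forall>e\<in>EA. e \<subseteq> VA" unfolding EA_def VA_def by (rule path_edges) (use E0V pA0 rV0 in auto)
  have EKV: "\<forall>e\<in>EK. e \<subseteq> VK" unfolding EK_def by auto
  have EBV: "\<forall>e\<in>EB. e \<subseteq> VB" unfolding EB_def VB_def by (rule path_edges) (use EKV pB0 KV in auto)
  have ECV: "\<forall>e\<in>EC. e \<subseteq> VC" unfolding EC_def VC_def by (rule path_edges) (use pC0 in auto)
  have "W (spider G r h g k m) cen n x d = W (VA, EA) cen n x d * W (VC \<union> VB, EC \<union> EB) cen n x d"
    unfolding sp by (rule glue) (use fA fB fC i1 EAV EBV ECV in auto)
  also have "W (VC \<union> VB, EC \<union> EB) cen n x d = W (VC, EC) cen n x d * W (VB, EB) cen n x d"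
    by (rule glue) (use fB fC i2 EBV ECV in auto)
  also have "W (VA, EA) cen n x d = (T n x ^^ g) (W (V0, E0) (Inl r) n x) d"
  proof -
    have inj: "inj_on pA {0..g}" unfolding pA_def by (rule rev_inj[OF sA_inj])
    have dis: "pA ` {1..g} \<inter> V0 = {}" unfolding pA_def rev_img V0_def by (rule A_disj)
    show ?thesis using path[OF _ rV0 E0V pA0 inj dis, of n x] finV dn cenA unfolding VA_def EA_def V0_def by simp
  qed
  also have "W (VC, EC) cen n x d = U n x h d"
  proof -
    have inj: "inj_on pC {0..h}" unfolding pC_def by (rule rev_inj[OF sC_inj])
    have dis: "pC ` {1..h} \<inter> {s_C r g k h} = {}" unfolding pC_def rev_img
    proof -
      have "s_C r g k j \<noteq> s_C r g k h" if "j < h" for j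
        using sC_inj[of r g k h] that by (auto dest: inj_onD)
      then show "s_C r g k ` {0..<h} \<inter> {s_C r g k h} = {}" by (auto simp: image_iff) metis
    qed
    have "W (VC, EC) cen n x d = (T n x ^^ h) (W ({s_C r g k h}, {}) (s_C r g k h) n x) d"
      using path[OF _ _ _ pC0 inj dis, of "{}" n x] dn cenC unfolding VC_def EC_def by simp
    also have "\<dots> = U n x h d" by (rule Tpow_cong) (use dn W_single in auto)
    finally show ?thesis .
  qed
  also have "W (VB, EB) cen n x d = (T n x ^^ k) (\<lambda>d. fact (m - 1) * Ev n x (m - 1) d) d"
  proof -
    have inj: "inj_on pB {0..k}" unfolding pB_def by (rule rev_inj[OF sB_inj])
    have dis: "pB ` {1..k} \<inter> VK = {}" unfolding pB_def rev_img VK_def by (rule B_disj)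
    have "W (VB, EB) cen n x d = (T n x ^^ k) (W (VK, EK) (s_K r g k 0) n x) d"
      using path[OF _ KV EKV pB0 inj dis, of n x] dn cenB unfolding VB_def EB_def VK_def by simp
    also have "\<dots> = (T n x ^^ k) (\<lambda>d. fact (m - 1) * Ev n x (m - 1) d) d"
    proof (rule Tpow_cong[OF _ dn], intro allI impI)
      fix c assume cn: "c < n"
      have cK: "card VK = m" unfolding VK_def using card_image[OF sK_inj[of r g k m]] by simp
      show "W (VK, EK) (s_K r g k 0) n x c = fact (m - 1) * Ev n x (m - 1) c"
        using clique[of VK "s_K r g k 0" c n x] KV cn cK unfolding EK_def VK_def by simp
    qed
    finally show ?thesis .
  qed
  finally show ?thesis unfolding cen_def V0_def E0_def V_def E_def by (simp add: mult_ac)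
qed



lemma ipTU: "ip n x ((T n x ^^ g) w) (U n x j) = ip n x (\<lambda>_. 1) ((T n x ^^ (g + j)) w)"
proof -
  have "ip n x ((T n x ^^ g) w) (U n x j) = ip n x ((T n x ^^ j) ((T n x ^^ g) w)) (\<lambda>_. 1)"
    by (rule selfadj_pow)
  also have "\<dots> = ip n x (\<lambda>_. 1) ((T n x ^^ (g + j)) w)"
    unfolding ip_def by (simp add: funpow_add mult_ac add.commute[of g j])
  finally show ?thesis .
qed

lemma W_Inl:
  fixes G :: "'a graph"
  assumes sg: "simple_graph G" and rV: "r \<in> fst G"
  shows "W (Inl ` fst G, image Inl ` snd G) (Inl r :: 'a + 'b) n x = W G r n x"
proof
  fix d
  have "W (Inl ` fst G, image Inl ` snd G) (Inl r :: 'a + 'b) n x d = W (fst G, snd G) r n x d"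
    by (rule W_inj) (use sg rV in \<open>auto simp: simple_graph_def\<close>)
  then show "W (Inl ` fst G, image Inl ` snd G) (Inl r :: 'a + 'b) n x d = W G r n x d" by simp
qed

theorem corollary4p6:
  fixes G :: "'a graph" and r :: 'a and g k m h n :: nat and x :: "nat \<Rightarrow> real"
  assumes "simple_graph G" and "r \<in> fst G" and "m \<ge> 1" and "h \<ge> 1"
  shows "csf (spider G r h g k m) n x =
    fact (m - 1) *
      ((\<Sum>z = 0..m - 1. esym n z x * csf (pend G r (g + h + k + m - z - 1)) n x)
       - (\<Sum>z = 1..m - 1. csf (lollipop z h) n x / fact (z - 1) * csf (pend G r (g + k + m - z - 1)) n x))
    + (\<Sum>z = 0..<k. csf (lollipop m z) n x * csf (pend G r (g + h + k - z - 1)) n x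
                    - csf (lollipop m (h + z)) n x * csf (pend G r (g + k - z - 1)) n x)"
proof -
  note sg = assms(1) and rV = assms(2) and m = assms(3) and h = assms(4)
  define w where "w = W G r n x"
  define \<kappa> where "\<kappa> = (\<lambda>d. fact (m - 1) * Ev n x (m - 1) d)"
  define P where "P = (\<lambda>t. ip n x (\<lambda>_. 1) ((T n x ^^ t) w))"
  have Pe: "csf (pend G r t) n x = P t" for t
    unfolding P_def w_def using csf_pend[OF sg rV, of t n x] W_Inl[OF sg rV, where 'b = nat] by simp
  have Le: "csf (lollipop z t) n x = fact (z - 1) * ip n x (U n x t) (Ev n x (z - 1))" if "z \<ge> 1" for z t
  proof -
    have "csf (lollipop z t) n x = ip n x (U n x t) (\<lambda>d. fact (z - 1) * Ev n x (z - 1) d)"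
      using csf_lolli[OF that, of t n x] selfadj_pow by metis
    then show ?thesis by (simp add: ip_smult)
  qed
  have Lm: "csf (lollipop m t) n x = ip n x (\<lambda>_. 1) ((T n x ^^ t) \<kappa>)" for t
    unfolding \<kappa>_def using csf_lolli[OF m] .
  have sp: "csf (spider G r h g k m) n x = ip n x ((T n x ^^ g) w) (\<lambda>d. U n x h d * (T n x ^^ k) \<kappa> d)"
  proof -
    have fin: "finite (fst (spider G r h g k m))" using sg by (simp add: spider_def simple_graph_def)
    have cin: "s_cen r g k \<in> fst (spider G r h g k m)"
      unfolding spider_def fst_conv by (metis sC_0 atLeastAtMost_iff image_eqI le0 UnI2)
    show ?thesis
      unfolding csf_W[OF fin cin] ip_def
      using spider_W[OF sg rV m h, where n=n and x=x and g=g and k=k] W_Inl[OF sg rV, where 'b = "nat + nat \<times> nat"]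
      by (intro sum.cong refl) (simp add: w_def \<kappa>_def mult_ac)
  qed
  have step1: "ip n x ((T n x ^^ g) w) (\<lambda>d. U n x h d * (T n x ^^ k) \<kappa> d) =
      ip n x ((T n x ^^ (k + g)) w) (\<lambda>d. U n x h d * \<kappa> d)
      + (\<Sum>z<k. csf (lollipop m z) n x * P (g + h + k - z - 1)
               - csf (lollipop m (h + z)) n x * P (g + k - z - 1))"
  proof -
    have "ip n x ((T n x ^^ g) w) (\<lambda>d. U n x h d * (T n x ^^ k) \<kappa> d) =
      ip n x ((T n x ^^ k) ((T n x ^^ g) w)) (\<lambda>d. U n x h d * \<kappa> d)
      + (\<Sum>z<k. ip n x (\<lambda>_. 1) ((T n x ^^ z) \<kappa>) * ip n x ((T n x ^^ g) w) (U n x (h + k - 1 - z))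
               - ip n x (\<lambda>_. 1) ((T n x ^^ (h + z)) \<kappa>) * ip n x ((T n x ^^ g) w) (U n x (k - 1 - z)))"
      using Pk[of n x h k \<kappa>] by blast
    also have "(T n x ^^ k) ((T n x ^^ g) w) = (T n x ^^ (k + g)) w" by (simp add: funpow_add)
    also have "(\<Sum>z<k. ip n x (\<lambda>_. 1) ((T n x ^^ z) \<kappa>) * ip n x ((T n x ^^ g) w) (U n x (h + k - 1 - z))
               - ip n x (\<lambda>_. 1) ((T n x ^^ (h + z)) \<kappa>) * ip n x ((T n x ^^ g) w) (U n x (k - 1 - z)))
       = (\<Sum>z<k. csf (lollipop m z) n x * P (g + h + k - z - 1)
               - csf (lollipop m (h + z)) n x * P (g + k - z - 1))"
    proof (intro sum.cong refl)
      fix z assume "z \<in> {..<k}"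
      then have "g + (h + k - 1 - z) = g + h + k - z - 1" "g + (k - 1 - z) = g + k - z - 1" by auto
      then show "ip n x (\<lambda>_. 1) ((T n x ^^ z) \<kappa>) * ip n x ((T n x ^^ g) w) (U n x (h + k - 1 - z))
               - ip n x (\<lambda>_. 1) ((T n x ^^ (h + z)) \<kappa>) * ip n x ((T n x ^^ g) w) (U n x (k - 1 - z))
          = csf (lollipop m z) n x * P (g + h + k - z - 1)
               - csf (lollipop m (h + z)) n x * P (g + k - z - 1)"
        unfolding Lm ipTU P_def by simp
    qed
    finally show ?thesis .
  qed
  have step2: "ip n x ((T n x ^^ (k + g)) w) (\<lambda>d. U n x h d * \<kappa> d) =
     fact (m - 1) *
      ((\<Sum>z = 0..m - 1. esym n z x * P (g + h + k + m - z - 1))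
       - (\<Sum>z = 1..m - 1. csf (lollipop z h) n x / fact (z - 1) * P (g + k + m - z - 1)))"
  proof -
    have "ip n x ((T n x ^^ (k + g)) w) (\<lambda>d. U n x h d * \<kappa> d)
        = fact (m - 1) * ip n x ((T n x ^^ (k + g)) w) (\<lambda>d. U n x h d * Ev n x (m - 1) d)"
      unfolding \<kappa>_def by (subst ip_smult[symmetric]) (simp add: mult_ac)
    also have "ip n x ((T n x ^^ (k + g)) w) (\<lambda>d. U n x h d * Ev n x (m - 1) d)
       = (\<Sum>z=0..m - 1. esym n z x * ip n x ((T n x ^^ (k + g)) w) (U n x (h + (m - 1) - z)))
      - (\<Sum>z=1..m - 1. ip n x (U n x h) (Ev n x (z - 1)) * ip n x ((T n x ^^ (k + g)) w) (U n x ((m - 1) - z)))"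
      using Bj[of n x h "m - 1"] by blast
    also have "(\<Sum>z=0..m - 1. esym n z x * ip n x ((T n x ^^ (k + g)) w) (U n x (h + (m - 1) - z)))
       = (\<Sum>z = 0..m - 1. esym n z x * P (g + h + k + m - z - 1))"
    proof (intro sum.cong refl)
      fix z assume "z \<in> {0..m - 1}"
      then have "k + g + (h + (m - 1) - z) = g + h + k + m - z - 1" using m by auto
      then show "esym n z x * ip n x ((T n x ^^ (k + g)) w) (U n x (h + (m - 1) - z)) = esym n z x * P (g + h + k + m - z - 1)"
        unfolding ipTU P_def by simp
    qed
    also have "(\<Sum>z=1..m - 1. ip n x (U n x h) (Ev n x (z - 1)) * ip n x ((T n x ^^ (k + g)) w) (U n x ((m - 1) - z)))
       = (\<Sum>z = 1..m - 1. csf (lollipop z h) n x / fact (z - 1) * P (g + k + m - z - 1))"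
    proof (intro sum.cong refl)
      fix z assume z: "z \<in> {1..m - 1}"
      then have "k + g + ((m - 1) - z) = g + k + m - z - 1" using m by auto
      moreover have "csf (lollipop z h) n x / fact (z - 1) = ip n x (U n x h) (Ev n x (z - 1))"
        using Le[of z h] z by simp
      ultimately show "ip n x (U n x h) (Ev n x (z - 1)) * ip n x ((T n x ^^ (k + g)) w) (U n x ((m - 1) - z))
          = csf (lollipop z h) n x / fact (z - 1) * P (g + k + m - z - 1)"
        unfolding ipTU P_def by simp
    qed
    finally show ?thesis .
  qed
  show ?thesis
    unfolding Pe sp step1 step2 by (simp add: atLeast0LessThan)
qed

end
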